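(* Let $d \ge 1$ and let $\beta = (\beta_1,\ldots,\beta_{d+1})$ be an optimal solution of the problem of minimizing $\beta_1\cdots\beta_d$ over all $(\beta_1,\dots,\beta_{d+1}) \in \mathbb{R}^{d+1}$ satisfying $\beta_1 \ge \cdots \ge \beta_{d+1} \ge 0$, $\beta_1+\cdots+\beta_{d+1}=1$, and, for every $t \in \{1,\dots,d\}$, $\prod_{i=1}^t (\beta_i - \beta_{d+1}) \le \sum_{j=t+1}^{d+1} (\beta_j - \beta_{d+1}) + (d+1)\beta_{d+1}$. Then there exists $\ell \in \{1,\dots,d\}$ such that (a) $\beta_1 \cdots \beta_d = f_\ell(\beta_{d+1})$, and (b) $\frac{1}{(d+1)(s_{\ell+1}-1)} \le \beta_{d+1} \le \frac{1}{(d+1)(s_\ell-1)}$.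
   Context: The Sylvester sequence is defined by $s_1 := 2$ and $s_i := 1 + s_1 s_2 \cdots s_{i-1}$ for $i \ge 2$. For $\ell \in \{1,\dots,d\}$ and $\alpha\in\mathbb{R}$, $f_\ell(\alpha) := \Bigl(\prod_{i=1}^{\ell-1}\bigl(\tfrac{1}{s_i}+\alpha\bigr)\Bigr)\bigl(\tfrac{1}{s_\ell-1} - d\alpha\bigr)\alpha^{d-\ell}$ (the empty product being $1$). *)

theory Defs
  imports Complex_Main
begin

fun sylv_list :: "nat \<Rightarrow> nat list" where
  "sylv_list 0 = []"
| "sylv_list (Suc n) = sylv_list n @ [1 + prod_list (sylv_list n)]"

(* Sylvester sequence s_i for i >= 1 (s_1 = 2) *)
definition sylv :: "nat \<Rightarrow> nat" where
  "sylv i = sylv_list i ! (i - 1)"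

definition fl :: "nat \<Rightarrow> nat \<Rightarrow> real \<Rightarrow> real" where
  "fl d l \<alpha> = (\<Prod>i=1..<l. 1 / real (sylv i) + \<alpha>)
       * (1 / (real (sylv l) - 1) - real d * \<alpha>) * \<alpha> ^ (d - l)"

definition feasible :: "nat \<Rightarrow> (nat \<Rightarrow> real) \<Rightarrow> bool" where
  "feasible d \<beta> \<longleftrightarrow>
     (\<forall>i\<in>{1..d}. \<beta> i \<ge> \<beta> (i + 1)) \<and> \<beta> (d + 1) \<ge> 0 \<and>
     (\<Sum>i=1..d+1. \<beta> i) = 1 \<and>
     (\<forall>t\<in>{1..d}. (\<Prod>i=1..t. \<beta> i - \<beta> (d + 1))
        \<le> (\<Sum>j=t+1..d+1. \<beta> j - \<beta> (d + 1)) + real (d + 1) * \<beta> (d + 1))"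

definition optimal :: "nat \<Rightarrow> (nat \<Rightarrow> real) \<Rightarrow> bool" where
  "optimal d \<beta> \<longleftrightarrow> feasible d \<beta> \<and>
     (\<forall>\<gamma>. feasible d \<gamma> \<longrightarrow> (\<Prod>i=1..d. \<beta> i) \<le> (\<Prod>i=1..d. \<gamma> i))"

end

theory Submission
  imports Defs
begin

lemma len_sylv_list: "length (sylv_list n) = n"
  by (induction n) auto

lemma sylv_Suc0: "sylv (Suc n) = 1 + prod_list (sylv_list n)"
  unfolding sylv_def by (simp add: nth_append len_sylv_list)

lemma prod_sylv: "prod_list (sylv_list n) = (\<Prod>i=1..n. sylv i)"
  by (induction n) (auto simp: sylv_Suc0)

lemma sylv_Suc: "sylv (Suc n) = 1 + (\<Prod>i=1..n. sylv i)"
  using sylv_Suc0 prod_sylv by simp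

lemma Qge1: "(\<Prod>i=1..n. sylv i) \<ge> 1"
proof (induction n)
  case (Suc n)
  then show ?case by (simp add: sylv_Suc)
qed simp

definition ee :: "nat \<Rightarrow> real" where
  "ee n = 1 / real (\<Prod>i=1..n. sylv i)"

lemma ee_pos: "ee n > 0"
proof -
  have "real (\<Prod>i=1..n. sylv i) \<ge> 1" by (metis Qge1 of_nat_1 of_nat_le_iff)
  then show ?thesis unfolding ee_def by (intro divide_pos_pos) linarith+
qed

lemma ee0: "ee 0 = 1" unfolding ee_def by simp

lemma Q_Suc: "real (\<Prod>i=1..Suc n. sylv i) = real (\<Prod>i=1..n. sylv i) * (1 + real (\<Prod>i=1..n. sylv i))"
  by (simp add: sylv_Suc algebra_simps del: of_nat_prod)

lemma ee_Suc: "ee (Suc n) = ee n * ee n / (1 + ee n)"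
proof -
  define q where "q = real (\<Prod>i=1..n. sylv i)"
  have q: "q \<ge> 1" using Qge1[of n] unfolding q_def by linarith
  have a: "ee (Suc n) = 1 / (q * (1 + q))" unfolding ee_def q_def using Q_Suc by (simp del: of_nat_prod)
  have e: "ee n = 1 / q" unfolding ee_def q_def by simp
  have "ee n * ee n / (1 + ee n) = 1 / (q * (1 + q))" unfolding e using q by (simp add: field_simps)
  then show ?thesis using a by simp
qed

lemma sylv_real: "real (sylv (Suc n)) = 1 + 1 / ee n"
  unfolding ee_def by (simp add: sylv_Suc)

lemma inv_sylv: "1 / real (sylv (Suc n)) = ee n - ee (Suc n)"
  using ee_pos[of n] by (simp add: ee_Suc sylv_real field_simps)

lemma inv_sylv2: "1 / real (sylv (Suc n)) = ee n / (1 + ee n)"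
  using ee_pos[of n] by (simp add: sylv_real field_simps)

lemma sylv_m1: "1 / (real (sylv (Suc n)) - 1) = ee n"
  by (simp add: sylv_real)

lemma ee_Suc_le: "ee (Suc n) \<le> ee n"
  using inv_sylv[of n] ee_pos[of n] Qge1[of "Suc n"] by (simp add: sylv_real) (smt (verit) divide_nonneg_nonneg ee_pos)

lemma ee_anti: "m \<le> n \<Longrightarrow> ee n \<le> ee m"
  by (induction n rule: dec_induct) (auto intro: order_trans[OF ee_Suc_le])

lemma Ysum: "(\<Sum>i=1..n. 1 / real (sylv i)) = 1 - ee n"
proof (induction n)
  case 0 then show ?case by (simp add: ee0)
next
  case (Suc n) then show ?case by (simp add: inv_sylv)
qed

lemma Yprod: "(\<Prod>i=1..n. 1 / real (sylv i)) = ee n"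
proof (induction n)
  case 0 then show ?case by (simp add: ee0)
next
  case (Suc n) then show ?case using ee_pos[of n] by (simp add: inv_sylv2 ee_Suc)
qed

lemma sylv_mono_Suc: "sylv (Suc n) \<le> sylv (Suc (Suc n))"
proof -
  have "sylv (Suc (Suc n)) = 1 + (\<Prod>i=1..n. sylv i) * sylv (Suc n)"
    by (simp add: sylv_Suc[of "Suc n"])
  then show ?thesis using Qge1[of n] by (metis le_add2 le_trans mult_le_mono1 nat_mult_1)
qed

lemma inv_sylv_anti: "i \<ge> 1 \<Longrightarrow> 1 / real (sylv (Suc i)) \<le> 1 / real (sylv i)"
proof -
  assume "i \<ge> 1"
  then obtain m where i: "i = Suc m" by (cases i) auto
  have "sylv i \<ge> 2" using Qge1[of m] i by (simp add: sylv_Suc)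
  then show ?thesis using sylv_mono_Suc[of m] i by (simp add: frac_le)
qed


lemma abel:
  fixes c \<delta> :: "nat \<Rightarrow> real"
  assumes "\<forall>i\<in>{1..<n}. c i \<le> c (Suc i)"
    and "\<forall>k\<in>{1..<n}. (\<Sum>i=1..k. \<delta> i) \<ge> 0"
  shows "(\<Sum>i=1..n. c i * \<delta> i) \<le> c n * (\<Sum>i=1..n. \<delta> i)"
  using assms
proof (induction n)
  case 0 then show ?case by simp
next
  case (Suc n)
  have ih: "(\<Sum>i=1..n. c i * \<delta> i) \<le> c n * (\<Sum>i=1..n. \<delta> i)"
    using Suc by auto
  have "c n * (\<Sum>i=1..n. \<delta> i) \<le> c (Suc n) * (\<Sum>i=1..n. \<delta> i)"
  proof (cases "n = 0")
    case False
    then have "c n \<le> c (Suc n)" "(\<Sum>i=1..n. \<delta> i) \<ge> 0" using Suc.prems by auto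
    then show ?thesis by (simp add: mult_right_mono)
  qed simp
  then show ?case using ih by (simp add: algebra_simps)
qed

lemma prod_exp:
  fixes u :: "nat \<Rightarrow> real"
  assumes "finite A" "\<forall>i\<in>A. 0 \<le> 1 + u i"
  shows "(\<Prod>i\<in>A. 1 + u i) \<le> exp (\<Sum>i\<in>A. u i)"
  using assms by (simp add: exp_sum prod_mono)

lemma chain_le:
  fixes a :: "nat \<Rightarrow> real"
  assumes "\<forall>i\<in>{1..<n}. a (Suc i) \<le> a i" "1 \<le> i" "i \<le> j" "j \<le> n"
  shows "a j \<le> a i"
  using assms(3,4)
proof (induction j rule: dec_induct)
  case (step m)
  then have "a (Suc m) \<le> a m" using assms(1,2) by auto
  then show ?case using step by auto
qed simp

lemma majorize:
  fixes a b :: "nat \<Rightarrow> real"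
  assumes n: "n \<ge> 1"
    and dec: "\<forall>i\<in>{1..<n}. a (Suc i) \<le> a i"
    and apos: "\<forall>i\<in>{1..n}. a i > 0"
    and bnn: "\<forall>i\<in>{1..n}. b i \<ge> 0"
    and D: "\<forall>k\<in>{1..<n}. (\<Sum>i=1..k. b i - a i) \<ge> 0"
  shows "(\<Prod>i=1..n. b i) \<le> (\<Prod>i=1..n. a i) * exp ((\<Sum>i=1..n. b i - a i) / a n)"
proof -
  define c where "c i = 1 / a i" for i
  have cmono: "\<forall>i\<in>{1..<n}. c i \<le> c (Suc i)"
    using dec apos unfolding c_def by (auto intro!: divide_left_mono)
  have ab: "(\<Sum>i=1..n. c i * (b i - a i)) \<le> c n * (\<Sum>i=1..n. b i - a i)"
    by (rule abel[OF cmono D])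
  have bi: "b i = a i * (1 + c i * (b i - a i))" if "i \<in> {1..n}" for i
  proof -
    have "a i > 0" using apos that by auto
    then show ?thesis unfolding c_def by (simp add: field_simps)
  qed
  have "(\<Prod>i=1..n. b i) = (\<Prod>i=1..n. a i * (1 + c i * (b i - a i)))"
    using bi by (intro prod.cong) auto
  also have "\<dots> = (\<Prod>i=1..n. a i) * (\<Prod>i=1..n. 1 + c i * (b i - a i))"
    by (simp add: prod.distrib)
  also have "\<dots> \<le> (\<Prod>i=1..n. a i) * exp (\<Sum>i=1..n. c i * (b i - a i))"
  proof (rule mult_left_mono)
    show "(\<Prod>i=1..n. 1 + c i * (b i - a i)) \<le> exp (\<Sum>i=1..n. c i * (b i - a i))"
    proof (rule prod_exp)
      show "\<forall>i\<in>{1..n}. 0 \<le> 1 + c i * (b i - a i)"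
        using apos bnn unfolding c_def by (auto simp: field_simps)
    qed simp
    show "0 \<le> (\<Prod>i=1..n. a i)" using apos by (intro prod_nonneg) (auto simp: less_imp_le)
  qed
  also have "\<dots> \<le> (\<Prod>i=1..n. a i) * exp ((\<Sum>i=1..n. b i - a i) / a n)"
  proof (rule mult_left_mono)
    show "exp (\<Sum>i=1..n. c i * (b i - a i)) \<le> exp ((\<Sum>i=1..n. b i - a i) / a n)"
      using ab unfolding c_def by simp
    show "0 \<le> (\<Prod>i=1..n. a i)" using apos by (intro prod_nonneg) (auto simp: less_imp_le)
  qed
  finally show ?thesis .
qed


definition xfeas :: "nat \<Rightarrow> real \<Rightarrow> (nat \<Rightarrow> real) \<Rightarrow> bool" where
  "xfeas d S x \<longleftrightarrow> (\<forall>i\<in>{1..<d}. x (Suc i) \<le> x i) \<and> (\<forall>i\<in>{1..d}. 0 \<le> x i) \<and>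
     (\<Sum>i=1..d. x i) = S \<and> (\<forall>t\<in>{1..d}. (\<Prod>i=1..t. x i) + (\<Sum>i=1..t. x i) \<le> 1)"

lemma sum_split:
  fixes f :: "nat \<Rightarrow> real"
  assumes "t \<le> n"
  shows "(\<Sum>i=1..n. f i) = (\<Sum>i=1..t. f i) + (\<Sum>i=Suc t..n. f i)"
  using assms
proof (induction n rule: dec_induct)
  case base then show ?case by simp
next
  case (step m) then show ?case by simp
qed

lemma egypt_step:
  fixes x :: "nat \<Rightarrow> real"
  assumes t: "t \<ge> 1"
    and dec: "\<forall>i\<in>{1..<t}. x (Suc i) \<le> x i"
    and nn: "\<forall>i\<in>{1..t}. 0 \<le> x i"
    and C: "(\<Prod>i=1..t. x i) + (\<Sum>i=1..t. x i) \<le> 1"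
    and IH: "\<forall>k\<in>{1..<t}. (\<Sum>i=1..k. x i) \<le> 1 - ee k"
  shows "(\<Sum>i=1..t. x i) \<le> 1 - ee t"
proof (cases "x t = 0")
  case True
  obtain m where m: "t = Suc m" using t by (cases t) auto
  have "(\<Sum>i=1..m. x i) \<le> 1 - ee m"
  proof (cases "m = 0")
    case True then show ?thesis by (simp add: ee0)
  next
    case False then show ?thesis using IH m by auto
  qed
  moreover have "ee t \<le> ee m" using m ee_anti by simp
  ultimately show ?thesis using True m by simp
next
  case False
  then have xt: "x t > 0" using nn t by force
  have apos: "\<forall>i\<in>{1..t}. x i > 0"
  proof
    fix i assume "i \<in> {1..t}"
    then have "x t \<le> x i" using chain_le[OF dec, of i t] by auto
    then show "x i > 0" using xt by linarith
  qed
  have bnn: "\<forall>i\<in>{1..t}. (1 / real (sylv i)) \<ge> 0" by simp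
  have D: "\<forall>k\<in>{1..<t}. (\<Sum>i=1..k. 1 / real (sylv i) - x i) \<ge> 0"
  proof
    fix k assume k: "k \<in> {1..<t}"
    have "(\<Sum>i=1..k. 1 / real (sylv i) - x i) = (\<Sum>i=1..k. 1 / real (sylv i)) - (\<Sum>i=1..k. x i)"
      by (rule sum_subtractf)
    then show "(\<Sum>i=1..k. 1 / real (sylv i) - x i) \<ge> 0" using Ysum[of k] IH k by auto
  qed
  have M: "(\<Prod>i=1..t. 1 / real (sylv i)) \<le> (\<Prod>i=1..t. x i) * exp ((\<Sum>i=1..t. 1 / real (sylv i) - x i) / x t)"
    by (rule majorize[OF t dec apos bnn D])
  show ?thesis
  proof (rule ccontr)
    assume A: "\<not> ?thesis"
    have "(\<Sum>i=1..t. 1 / real (sylv i) - x i) = (\<Sum>i=1..t. 1 / real (sylv i)) - (\<Sum>i=1..t. x i)"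
      by (rule sum_subtractf)
    then have neg: "(\<Sum>i=1..t. 1 / real (sylv i) - x i) < 0"
      using Ysum[of t] A by linarith
    then have "(\<Sum>i=1..t. 1 / real (sylv i) - x i) / x t < 0" using xt by (simp add: divide_neg_pos)
    then have e1: "exp ((\<Sum>i=1..t. 1 / real (sylv i) - x i) / x t) < 1" by simp
    have Ppos: "(\<Prod>i=1..t. x i) > 0" using apos by (intro prod_pos) auto
    have "ee t < (\<Prod>i=1..t. x i)"
    proof -
      have "(\<Prod>i=1..t. x i) * exp ((\<Sum>i=1..t. 1 / real (sylv i) - x i) / x t) < (\<Prod>i=1..t. x i)"
        using e1 Ppos by simp
      then show ?thesis using M Yprod[of t] by linarith
    qed
    then show False using C A by linarith
  qed
qed

lemma egypt:
  fixes x :: "nat \<Rightarrow> real"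
  assumes dec: "\<forall>i\<in>{1..<n}. x (Suc i) \<le> x i"
    and nn: "\<forall>i\<in>{1..n}. 0 \<le> x i"
    and C: "\<forall>t\<in>{1..n}. (\<Prod>i=1..t. x i) + (\<Sum>i=1..t. x i) \<le> 1"
  shows "t \<in> {1..n} \<Longrightarrow> (\<Sum>i=1..t. x i) \<le> 1 - ee t"
proof (induction t rule: less_induct)
  case (less t)
  show ?case
  proof (rule egypt_step)
    show "1 \<le> t" using less by auto
    show "\<forall>i\<in>{1..<t}. x (Suc i) \<le> x i" using dec less.prems by auto
    show "\<forall>i\<in>{1..t}. 0 \<le> x i" using nn less.prems by auto
    show "(\<Prod>i=1..t. x i) + (\<Sum>i=1..t. x i) \<le> 1" using C less.prems by auto
    show "\<forall>k\<in>{1..<t}. (\<Sum>i=1..k. x i) \<le> 1 - ee k" using less by auto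
  qed
qed

lemma feas_to_x:
  assumes d: "d \<ge> 1" and F: "feasible d \<beta>"
  shows "xfeas d (1 - real (d + 1) * \<beta> (d + 1)) (\<lambda>i. \<beta> i - \<beta> (d + 1))"
proof -
  define \<alpha> where "\<alpha> = \<beta> (d + 1)"
  have dec: "\<forall>i\<in>{1..d}. \<beta> (Suc i) \<le> \<beta> i" using F unfolding feasible_def by auto
  have s1: "(\<Sum>i=1..d+1. \<beta> i) = 1" using F unfolding feasible_def by auto
  have con: "\<forall>t\<in>{1..d}. (\<Prod>i=1..t. \<beta> i - \<alpha>)
        \<le> (\<Sum>j=t+1..d+1. \<beta> j - \<alpha>) + real (d + 1) * \<alpha>"
    using F unfolding feasible_def \<alpha>_def by auto
  have nn: "\<forall>i\<in>{1..d}. 0 \<le> \<beta> i - \<alpha>"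
  proof
    fix i assume i: "i \<in> {1..d}"
    have dec': "\<forall>i\<in>{1..<d+1}. \<beta> (Suc i) \<le> \<beta> i" using dec by auto
    show "0 \<le> \<beta> i - \<alpha>" using chain_le[OF dec', of i "d+1"] i unfolding \<alpha>_def by auto
  qed
  have S1: "(\<Sum>i=1..d+1. \<beta> i - \<alpha>) = 1 - real (d+1) * \<alpha>"
    using s1 by (simp add: sum_subtractf)
  have S: "(\<Sum>i=1..d. \<beta> i - \<alpha>) = 1 - real (d+1) * \<alpha>"
    using S1 unfolding \<alpha>_def by simp
  have C: "\<forall>t\<in>{1..d}. (\<Prod>i=1..t. \<beta> i - \<alpha>) + (\<Sum>i=1..t. \<beta> i - \<alpha>) \<le> 1"
  proof
    fix t assume t: "t \<in> {1..d}"
    have "(\<Sum>i=1..d+1. \<beta> i - \<alpha>) = (\<Sum>i=1..t. \<beta> i - \<alpha>) + (\<Sum>i=Suc t..d+1. \<beta> i - \<alpha>)"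
      by (rule sum_split) (use t in auto)
    then show "(\<Prod>i=1..t. \<beta> i - \<alpha>) + (\<Sum>i=1..t. \<beta> i - \<alpha>) \<le> 1"
      using con t S1 by fastforce
  qed
  show ?thesis unfolding xfeas_def \<alpha>_def[symmetric] using dec nn S C by auto
qed

lemma x_to_feas:
  assumes d: "d \<ge> 1" and a: "\<alpha> \<ge> 0" and X: "xfeas d (1 - real (d + 1) * \<alpha>) z"
  shows "feasible d (\<lambda>i. if i \<le> d then z i + \<alpha> else \<alpha>)"
proof -
  define \<gamma> where "\<gamma> = (\<lambda>i. if i \<le> d then z i + \<alpha> else \<alpha>)"
  have dec: "\<forall>i\<in>{1..<d}. z (Suc i) \<le> z i" and nn: "\<forall>i\<in>{1..d}. 0 \<le> z i"
    and S: "(\<Sum>i=1..d. z i) = 1 - real (d + 1) * \<alpha>"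
    and C: "\<forall>t\<in>{1..d}. (\<Prod>i=1..t. z i) + (\<Sum>i=1..t. z i) \<le> 1"
    using X unfolding xfeas_def by auto
  have g1: "\<forall>i\<in>{1..d}. \<gamma> (i + 1) \<le> \<gamma> i"
  proof
    fix i assume i: "i \<in> {1..d}"
    show "\<gamma> (i + 1) \<le> \<gamma> i"
    proof (cases "i = d")
      case True then show ?thesis using nn i unfolding \<gamma>_def by auto
    next
      case False then show ?thesis using dec i unfolding \<gamma>_def by auto
    qed
  qed
  have gd: "\<gamma> (d + 1) = \<alpha>" unfolding \<gamma>_def by simp
  have sd: "(\<Sum>i=1..d. \<gamma> i) = (\<Sum>i=1..d. z i + \<alpha>)" unfolding \<gamma>_def by (intro sum.cong) auto
  have g3: "(\<Sum>i=1..d+1. \<gamma> i) = 1"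
    using sd S gd by (simp add: sum.distrib algebra_simps)
  have g4: "\<forall>t\<in>{1..d}. (\<Prod>i=1..t. \<gamma> i - \<gamma> (d + 1))
        \<le> (\<Sum>j=t+1..d+1. \<gamma> j - \<gamma> (d + 1)) + real (d + 1) * \<gamma> (d + 1)"
  proof
    fix t assume t: "t \<in> {1..d}"
    have p: "(\<Prod>i=1..t. \<gamma> i - \<gamma> (d + 1)) = (\<Prod>i=1..t. z i)"
      using t unfolding \<gamma>_def by (intro prod.cong) auto
    have s: "(\<Sum>j=t+1..d+1. \<gamma> j - \<gamma> (d + 1)) = (\<Sum>j=Suc t..d. z j)"
      using t unfolding \<gamma>_def by simp
    have sp: "(\<Sum>i=1..d. z i) = (\<Sum>i=1..t. z i) + (\<Sum>i=Suc t..d. z i)"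
      by (rule sum_split) (use t in auto)
    show "(\<Prod>i=1..t. \<gamma> i - \<gamma> (d + 1))
        \<le> (\<Sum>j=t+1..d+1. \<gamma> j - \<gamma> (d + 1)) + real (d + 1) * \<gamma> (d + 1)"
    proof -
      have Ct: "(\<Prod>i=1..t. z i) + (\<Sum>i=1..t. z i) \<le> 1" using C t by blast
      have "real (d+1) * \<gamma> (d+1) = real (d+1) * \<alpha>" using gd by simp
      then show ?thesis using p s sp S Ct by linarith
    qed
  qed
  show ?thesis unfolding feasible_def \<gamma>_def[symmetric] using g1 g3 g4 gd a by auto
qed


definition zz :: "nat \<Rightarrow> real \<Rightarrow> nat \<Rightarrow> real" where
  "zz l v i = (if i < l then 1 / real (sylv i) else if i = l then ee (l - 1) - v else 0)"

lemma zsum_lt: "t < l \<Longrightarrow> (\<Sum>i=1..t. zz l v i) = 1 - ee t"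
proof -
  assume "t < l"
  then have "(\<Sum>i=1..t. zz l v i) = (\<Sum>i=1..t. 1 / real (sylv i))"
    unfolding zz_def by (intro sum.cong) auto
  then show ?thesis using Ysum by simp
qed

lemma zprod_lt: "t < l \<Longrightarrow> (\<Prod>i=1..t. zz l v i) = ee t"
proof -
  assume "t < l"
  then have "(\<Prod>i=1..t. zz l v i) = (\<Prod>i=1..t. 1 / real (sylv i))"
    unfolding zz_def by (intro prod.cong) auto
  then show ?thesis using Yprod by simp
qed

lemma zsum_ge: assumes "1 \<le> l" "l \<le> t" shows "(\<Sum>i=1..t. zz l v i) = 1 - v"
  using assms(2)
proof (induction t rule: dec_induct)
  case base
  obtain m where m: "l = Suc m" using assms(1) by (cases l) auto
  have "(\<Sum>i=1..m. zz l v i) = 1 - ee m" using zsum_lt m by simp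
  then show ?case using m by (simp add: zz_def)
next
  case (step k) then show ?case by (simp add: zz_def)
qed

lemma zprod_eq: assumes "l = Suc m" shows "(\<Prod>i=1..l. zz l v i) = ee m * (ee m - v)"
proof -
  have "(\<Prod>i=1..m. zz l v i) = ee m" using zprod_lt assms by simp
  then show ?thesis using assms by (simp add: zz_def)
qed

lemma zprod_gt: assumes "1 \<le> l" "l < t" shows "(\<Prod>i=1..t. zz l v i) = 0"
proof -
  have "Suc l \<in> {1..t}" "zz l v (Suc l) = 0" using assms by (auto simp: zz_def)
  then show ?thesis by (intro prod_zero) auto
qed

lemma z_feas:
  assumes l: "1 \<le> l" "l \<le> d" and v1: "ee l \<le> v" and v2: "v \<le> ee (l - 1)"
  shows "xfeas d (1 - v) (zz l v)"
proof -
  obtain m where m: "l = Suc m" using l by (cases l) auto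
  have vpos: "v \<ge> 0" using v1 ee_pos[of l] by linarith
  have zl: "zz l v l \<le> 1 / real (sylv l)" using m v1 inv_sylv[of m] by (simp add: zz_def)
  have nn: "\<forall>i. 0 \<le> zz l v i" using v2 by (simp add: zz_def)
  have dec: "\<forall>i\<in>{1..<d}. zz l v (Suc i) \<le> zz l v i"
  proof
    fix i assume i: "i \<in> {1..<d}"
    consider "Suc i < l" | "Suc i = l" | "Suc i > l" by linarith
    then show "zz l v (Suc i) \<le> zz l v i"
    proof cases
      case 1 then show ?thesis using inv_sylv_anti[of i] i by (simp add: zz_def)
    next
      case 2
      then have "zz l v i = 1 / real (sylv i)" by (simp add: zz_def)
      moreover have "1 / real (sylv l) \<le> 1 / real (sylv i)" using inv_sylv_anti[of i] i 2 by simp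
      ultimately show ?thesis using zl 2 by simp
    next
      case 3 then show ?thesis using v2 by (simp add: zz_def)
    qed
  qed
  have C: "\<forall>t\<in>{1..d}. (\<Prod>i=1..t. zz l v i) + (\<Sum>i=1..t. zz l v i) \<le> 1"
  proof
    fix t assume t: "t \<in> {1..d}"
    consider "t < l" | "t = l" | "t > l" by linarith
    then show "(\<Prod>i=1..t. zz l v i) + (\<Sum>i=1..t. zz l v i) \<le> 1"
    proof cases
      case 1 then show ?thesis using zsum_lt zprod_lt by simp
    next
      case 2
      define e where "e = ee m"
      have epos: "e > 0" using ee_pos unfolding e_def by simp
      have "e * e / (1 + e) \<le> v" using v1 m ee_Suc[of m] unfolding e_def by simp
      then have "e * e \<le> v * (1 + e)" using epos by (simp add: pos_divide_le_eq)
      then have "e * (e - v) \<le> v" by (simp add: algebra_simps)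
      then show ?thesis using 2 zprod_eq[OF m] zsum_ge[OF l(1), of t] unfolding e_def by simp
    next
      case 3
      have p: "(\<Prod>i=1..t. zz l v i) = 0" by (rule zprod_gt[OF l(1) 3])
      have s: "(\<Sum>i=1..t. zz l v i) = 1 - v" using zsum_ge[OF l(1), of t] 3 by simp
      show ?thesis using p s vpos by linarith
    qed
  qed
  show ?thesis unfolding xfeas_def using dec nn C zsum_ge[OF l(1,2)] by auto
qed

lemma choose_l: "1 \<le> m \<Longrightarrow> ee m \<le> v \<Longrightarrow> v \<le> 1 \<Longrightarrow> \<exists>l\<in>{1..m}. ee l \<le> v \<and> v \<le> ee (l - 1)"
proof (induction m rule: dec_induct)
  case base then show ?case by (auto simp: ee0)
next
  case (step k)
  show ?case
  proof (cases "ee k \<le> v")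
    case True then show ?thesis using step by force
  next
    case False then show ?thesis using step by force
  qed
qed

lemma prod_split:
  fixes f :: "nat \<Rightarrow> real"
  assumes "t \<le> n"
  shows "(\<Prod>i=1..n. f i) = (\<Prod>i=1..t. f i) * (\<Prod>i=Suc t..n. f i)"
  using assms
proof (induction n rule: dec_induct)
  case base then show ?case by simp
next
  case (step m) then show ?case by simp
qed

lemma fl_eq:
  assumes l: "1 \<le> l" "l \<le> d"
  shows "fl d l \<alpha> = (\<Prod>i=1..d. zz l (real (d+1) * \<alpha>) i + \<alpha>)"
proof -
  obtain m where m: "l = Suc m" using l by (cases l) auto
  define v where "v = real (d+1) * \<alpha>"
  have "(\<Prod>i=1..d. zz l v i + \<alpha>) = (\<Prod>i=1..l. zz l v i + \<alpha>) * (\<Prod>i=Suc l..d. zz l v i + \<alpha>)"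
    by (rule prod_split) (use l in auto)
  also have "(\<Prod>i=Suc l..d. zz l v i + \<alpha>) = (\<Prod>i=Suc l..d. \<alpha>)"
    by (intro prod.cong) (auto simp: zz_def)
  also have "\<dots> = \<alpha> ^ (d - l)" by simp
  also have "(\<Prod>i=1..l. zz l v i + \<alpha>) = (\<Prod>i=1..m. zz l v i + \<alpha>) * (ee m - v + \<alpha>)"
    using m by (simp add: zz_def)
  also have "(\<Prod>i=1..m. zz l v i + \<alpha>) = (\<Prod>i=1..<l. 1 / real (sylv i) + \<alpha>)"
    using m by (intro prod.cong) (auto simp: zz_def)
  also have "ee m - v + \<alpha> = 1 / (real (sylv l) - 1) - real d * \<alpha>"
    using m sylv_m1[of m] unfolding v_def by (simp add: algebra_simps)
  finally show ?thesis unfolding fl_def v_def by simp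
qed


theorem lemma3p2:
  fixes d :: nat and \<beta> :: "nat \<Rightarrow> real"
  assumes "d \<ge> 1" and "optimal d \<beta>"
  shows "\<exists>l\<in>{1..d}. (\<Prod>i=1..d. \<beta> i) = fl d l (\<beta> (d + 1)) \<and>
           1 / (real (d + 1) * (real (sylv (l + 1)) - 1)) \<le> \<beta> (d + 1) \<and>
           \<beta> (d + 1) \<le> 1 / (real (d + 1) * (real (sylv l) - 1))"
proof -
  have d: "d \<ge> 1" by fact
  have F: "feasible d \<beta>" and opt: "\<And>\<gamma>. feasible d \<gamma> \<Longrightarrow> (\<Prod>i=1..d. \<beta> i) \<le> (\<Prod>i=1..d. \<gamma> i)"
    using assms(2) unfolding optimal_def by auto
  define \<alpha> where "\<alpha> = \<beta> (d + 1)"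
  define v where "v = real (d + 1) * \<alpha>"
  define x where "x = (\<lambda>i. \<beta> i - \<alpha>)"
  have X: "xfeas d (1 - v) x" using feas_to_x[OF d F] unfolding v_def x_def \<alpha>_def .
  have xdec: "\<forall>i\<in>{1..<d}. x (Suc i) \<le> x i" and xnn: "\<forall>i\<in>{1..d}. 0 \<le> x i"
    and xS: "(\<Sum>i=1..d. x i) = 1 - v"
    and xC: "\<forall>t\<in>{1..d}. (\<Prod>i=1..t. x i) + (\<Sum>i=1..t. x i) \<le> 1"
    using X unfolding xfeas_def by auto
  have eg: "\<And>t. t \<in> {1..d} \<Longrightarrow> (\<Sum>i=1..t. x i) \<le> 1 - ee t"
    using egypt[OF xdec xnn xC] by blast
  have vlow: "ee d \<le> v" using eg[of d] d xS by auto
  have vpos: "v > 0" using vlow ee_pos[of d] by linarith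
  have apos: "\<alpha> > 0" using vpos unfolding v_def by (simp add: zero_less_mult_iff)
  have "(\<Sum>i=1..d. x i) \<ge> 0" using xnn by (intro sum_nonneg) auto
  then have vup: "v \<le> 1" using xS by linarith
  obtain l where l: "l \<in> {1..d}" and lv1: "ee l \<le> v" and lv2: "v \<le> ee (l - 1)"
    using choose_l[OF d vlow vup] by blast
  have l1: "1 \<le> l" "l \<le> d" using l by auto
  obtain m where m: "l = Suc m" using l1 by (cases l) auto
  define z where "z = zz l v"
  have Z: "xfeas d (1 - v) z" unfolding z_def by (rule z_feas[OF l1 lv1 lv2])
  define \<gamma> where "\<gamma> = (\<lambda>i. if i \<le> d then z i + \<alpha> else \<alpha>)"
  have "feasible d \<gamma>" unfolding \<gamma>_def
    by (rule x_to_feas[OF d]) (use apos Z v_def in auto)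
  then have up: "(\<Prod>i=1..d. \<beta> i) \<le> (\<Prod>i=1..d. \<gamma> i)" by (rule opt)
  have g: "(\<Prod>i=1..d. \<gamma> i) = (\<Prod>i=1..d. z i + \<alpha>)" unfolding \<gamma>_def by (intro prod.cong) auto
  have fl: "fl d l \<alpha> = (\<Prod>i=1..d. z i + \<alpha>)" unfolding z_def v_def by (rule fl_eq[OF l1])
  have bx: "(\<Prod>i=1..d. \<beta> i) = (\<Prod>i=1..d. x i + \<alpha>)" unfolding x_def by simp
  have zS: "(\<Sum>i=1..d. z i) = 1 - v" using Z unfolding xfeas_def by auto
  have znn: "\<forall>i\<in>{1..d}. 0 \<le> z i" using Z unfolding xfeas_def by auto
  have D: "\<forall>k\<in>{1..<d}. (\<Sum>i=1..k. (z i + \<alpha>) - (x i + \<alpha>)) \<ge> 0"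
  proof
    fix k assume k: "k \<in> {1..<d}"
    have "(\<Sum>i=1..k. x i) \<le> (\<Sum>i=1..k. z i)"
    proof (cases "k < l")
      case True
      then show ?thesis using eg[of k] k zsum_lt[of k l v] unfolding z_def by auto
    next
      case False
      have "(\<Sum>i=1..d. x i) = (\<Sum>i=1..k. x i) + (\<Sum>i=Suc k..d. x i)"
        by (rule sum_split) (use k in auto)
      moreover have "(\<Sum>i=Suc k..d. x i) \<ge> 0" using xnn k by (intro sum_nonneg) auto
      moreover have "(\<Sum>i=1..k. z i) = 1 - v" using zsum_ge[OF l1(1), of k] False unfolding z_def by simp
      ultimately show ?thesis using xS by linarith
    qed
    moreover have "(\<Sum>i=1..k. (z i + \<alpha>) - (x i + \<alpha>)) = (\<Sum>i=1..k. z i) - (\<Sum>i=1..k. x i)"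
      by (simp add: sum_subtractf)
    ultimately show "(\<Sum>i=1..k. (z i + \<alpha>) - (x i + \<alpha>)) \<ge> 0" by linarith
  qed
  have M: "(\<Prod>i=1..d. z i + \<alpha>) \<le> (\<Prod>i=1..d. x i + \<alpha>) * exp ((\<Sum>i=1..d. (z i + \<alpha>) - (x i + \<alpha>)) / (x d + \<alpha>))"
  proof (rule majorize[OF d])
    show "\<forall>i\<in>{1..<d}. x (Suc i) + \<alpha> \<le> x i + \<alpha>" using xdec by auto
    show "\<forall>i\<in>{1..d}. x i + \<alpha> > 0" using xnn apos by (auto intro: add_nonneg_pos)
    show "\<forall>i\<in>{1..d}. z i + \<alpha> \<ge> 0" using znn apos by auto
    show "\<forall>k\<in>{1..<d}. (\<Sum>i=1..k. (z i + \<alpha>) - (x i + \<alpha>)) \<ge> 0" by (rule D)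
  qed
  have "(\<Sum>i=1..d. (z i + \<alpha>) - (x i + \<alpha>)) = (\<Sum>i=1..d. z i) - (\<Sum>i=1..d. x i)"
    by (simp add: sum_subtractf)
  then have "(\<Sum>i=1..d. (z i + \<alpha>) - (x i + \<alpha>)) = 0" using zS xS by simp
  then have low: "(\<Prod>i=1..d. z i + \<alpha>) \<le> (\<Prod>i=1..d. \<beta> i)" using M bx by simp
  have eq: "(\<Prod>i=1..d. \<beta> i) = fl d l \<alpha>" using up g fl low by linarith
  have b1: "1 / (real (d + 1) * (real (sylv (l + 1)) - 1)) = ee l / real (d+1)"
    using sylv_m1[of l] by (metis Suc_eq_plus1 divide_divide_eq_left mult.commute)
  have b2: "1 / (real (d + 1) * (real (sylv l) - 1)) = ee m / real (d+1)"
    using sylv_m1[of m] m by (metis divide_divide_eq_left mult.commute)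
  have "ee l / real (d+1) \<le> \<alpha>" using lv1 unfolding v_def by (simp add: pos_divide_le_eq algebra_simps)
  moreover have "\<alpha> \<le> ee m / real (d+1)" using lv2 m unfolding v_def by (simp add: pos_le_divide_eq algebra_simps)
  ultimately show ?thesis using l eq b1 b2 unfolding \<alpha>_def by auto
qed

end
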